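(* Let $\eta: V\to\omega\times\omega$, written $\eta(x)=(\eta_1(x),\eta_2(x))$, be such that $\eta_2$ is unbounded on $A_1$ and unbounded on each set $\{i\}\times\omega\subseteq A_2$, $i\in\omega$. Then there is no homomorphism $G_\eta\to G^1$.
   Context: Graphs are simple and loopless; homomorphisms are edge-preserving vertex maps. $G^1$ is the graph with vertex set $\omega\times\{0,1\}$ whose edges are all pairs $\{(n,i),(m,i)\}$ with $n\ne m$, $i\in\{0,1\}$, $\lfloor\sqrt n\rfloor=\lfloor\sqrt m\rfloor$, together with all pairs $\{(n,0),(m,1)\}$ with $n<m$. Fix finite graphs $G_{j,i}$ ($i,j\in\omega$), each with at least one vertex, such that $\chi(G_{j,i})\ge i$ and $G_{j,i}$ contains no odd cycle of length $\le j$. Let $T$ be the tree with vertex set $V=A_0\cup A_1\cup A_2$, $A_0=\{r\}$, $A_1=\omega$, $A_2=\omega\times\omega$, and edge set $E$ consisting of all pairs $\{r,i\}$ ($i\in\omega$) and $\{i,(i,j)\}$ ($i,j\in\omega$). For $\eta:V\to\omega\times\omega$, $G_\eta$ is the graph obtained by taking, for each $x\in V$, a vertex-disjoint copy $G^x$ of $G_{\eta(x)}$, and adding all edges $\{a,b\}$ with $a\in V(G^x)$, $b\in V(G^y)$ whenever $\{x,y\}\in E$. *)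

theory Defs
  imports Complex_Main
begin

definition simple_graph :: "'a set \<Rightarrow> ('a \<Rightarrow> 'a \<Rightarrow> bool) \<Rightarrow> bool" where
  "simple_graph V E \<longleftrightarrow>
     (\<forall>a b. E a b \<longrightarrow> a \<in> V \<and> b \<in> V) \<and> (\<forall>a b. E a b \<longrightarrow> E b a) \<and> (\<forall>a. \<not> E a a)"

definition graph_hom ::
  "'a set \<Rightarrow> ('a \<Rightarrow> 'a \<Rightarrow> bool) \<Rightarrow> 'b set \<Rightarrow> ('b \<Rightarrow> 'b \<Rightarrow> bool) \<Rightarrow> ('a \<Rightarrow> 'b) \<Rightarrow> bool" where
  "graph_hom V E W F f \<longleftrightarrow> (\<forall>a\<in>V. f a \<in> W) \<and> (\<forall>a b. E a b \<longrightarrow> F (f a) (f b))"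

definition colorable :: "'a set \<Rightarrow> ('a \<Rightarrow> 'a \<Rightarrow> bool) \<Rightarrow> nat \<Rightarrow> bool" where
  "colorable V E k \<longleftrightarrow> (\<exists>c. (\<forall>a\<in>V. c a < k) \<and> (\<forall>a\<in>V. \<forall>b\<in>V. E a b \<longrightarrow> c a \<noteq> c b))"

definition chromatic_number :: "'a set \<Rightarrow> ('a \<Rightarrow> 'a \<Rightarrow> bool) \<Rightarrow> nat" where
  "chromatic_number V E = (LEAST k. colorable V E k)"

definition has_cycle_of_length :: "'a set \<Rightarrow> ('a \<Rightarrow> 'a \<Rightarrow> bool) \<Rightarrow> nat \<Rightarrow> bool" where
  "has_cycle_of_length V E n \<longleftrightarrow>
     (\<exists>vs. length vs = n \<and> n \<ge> 3 \<and> distinct vs \<and> set vs \<subseteq> V \<and>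
        (\<forall>k. Suc k < n \<longrightarrow> E (vs ! k) (vs ! Suc k)) \<and> E (vs ! (n - 1)) (vs ! 0))"

definition G1_verts :: "(nat \<times> nat) set" where
  "G1_verts = UNIV \<times> {0, 1}"

definition G1_adj :: "nat \<times> nat \<Rightarrow> nat \<times> nat \<Rightarrow> bool" where
  "G1_adj p q \<longleftrightarrow> p \<in> G1_verts \<and> q \<in> G1_verts \<and>
     ((fst p \<noteq> fst q \<and> snd p = snd q \<and>
        \<lfloor>sqrt (real (fst p))\<rfloor> = \<lfloor>sqrt (real (fst q))\<rfloor>)
      \<or> (snd p = 0 \<and> snd q = 1 \<and> fst p < fst q)
      \<or> (snd q = 0 \<and> snd p = 1 \<and> fst q < fst p))"

text \<open>The tree T: root r, level A_1 = \<omega>, level A_2 = \<omega> \<times> \<omega>.\<close>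

datatype tvert = Root | L1 nat | L2 nat nat

fun tree_adj :: "tvert \<Rightarrow> tvert \<Rightarrow> bool" where
  "tree_adj Root (L1 i) = True"
| "tree_adj (L1 i) Root = True"
| "tree_adj (L1 i) (L2 i' j) = (i = i')"
| "tree_adj (L2 i' j) (L1 i) = (i = i')"
| "tree_adj _ _ = False"

text \<open>G_eta for the family G (indexed G j i = G_{j,i}): vertex (x,a) with a a vertex of
  G_{eta(x)}.\<close>

definition Geta_verts :: "(nat \<Rightarrow> nat \<Rightarrow> 'a set) \<Rightarrow> (tvert \<Rightarrow> nat \<times> nat) \<Rightarrow> (tvert \<times> 'a) set" where
  "Geta_verts GV \<eta> = {(x, a). a \<in> GV (fst (\<eta> x)) (snd (\<eta> x))}"

definition Geta_adj ::
  "(nat \<Rightarrow> nat \<Rightarrow> 'a set) \<Rightarrow> (nat \<Rightarrow> nat \<Rightarrow> 'a \<Rightarrow> 'a \<Rightarrow> bool) \<Rightarrow> (tvert \<Rightarrow> nat \<times> nat)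
     \<Rightarrow> tvert \<times> 'a \<Rightarrow> tvert \<times> 'a \<Rightarrow> bool" where
  "Geta_adj GV GE \<eta> p q \<longleftrightarrow> p \<in> Geta_verts GV \<eta> \<and> q \<in> Geta_verts GV \<eta> \<and>
     ((fst p = fst q \<and> GE (fst (\<eta> (fst p))) (snd (\<eta> (fst p))) (snd p) (snd q))
      \<or> tree_adj (fst p) (fst q))"

end

theory Submission
  imports Defs
begin

definition Blk :: "nat \<Rightarrow> nat set" where
  "Blk n = {m. \<lfloor>sqrt (real m)\<rfloor> = \<lfloor>sqrt (real n)\<rfloor>}"

lemma Blk_finite: "finite (Blk n)"
proof -
  define k where "k = \<lfloor>sqrt (real n)\<rfloor>"
  have "Blk n \<subseteq> {..<nat ((k+1)^2)}"
  proof
    fix m assume "m \<in> Blk n"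
    hence e: "\<lfloor>sqrt (real m)\<rfloor> = k" by (simp add: Blk_def k_def)
    have k0: "k \<ge> 0" using e by (metis of_nat_0_le_iff real_sqrt_ge_zero zero_le_floor)
    have "sqrt (real m) < real_of_int k + 1" using e by linarith
    hence "(sqrt (real m))^2 < (real_of_int k + 1)^2"
      by (intro power_strict_mono) auto
    hence "real m < (real_of_int k + 1)^2" by simp
    hence "real m < real_of_int ((k+1)^2)" by simp
    hence "int m < (k+1)^2" by linarith
    thus "m \<in> {..<nat ((k+1)^2)}" using k0 by auto
  qed
  thus ?thesis using finite_subset by blast
qed

lemma G1_adj_neq: "G1_adj p q \<Longrightarrow> p \<noteq> q"
  by (auto simp: G1_adj_def)

lemma G1_adj_verts: "G1_adj p q \<Longrightarrow> snd q = 0 \<or> snd q = 1"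
  by (auto simp: G1_adj_def G1_verts_def)

lemma nb1: "G1_adj (n,1) q \<Longrightarrow> q \<in> ({..<n} \<times> {0}) \<union> (Blk n \<times> {1})"
  by (cases q) (auto simp: G1_adj_def G1_verts_def Blk_def)

lemma nb0: "G1_adj (n,0) (m,0) \<Longrightarrow> m \<in> Blk n"
  by (auto simp: G1_adj_def G1_verts_def Blk_def)

lemma hom_bound:
  assumes "finite W" "\<forall>a\<in>V. g a \<in> W"
    and "\<forall>a\<in>V. \<forall>b\<in>V. E a b \<longrightarrow> g a \<noteq> g b"
    and "chromatic_number V E \<ge> i"
  shows "i \<le> card W"
proof -
  obtain h where h: "bij_betw h W {0..<card W}" using ex_bij_betw_finite_nat[OF assms(1)] by blast
  have "colorable V E (card W)" unfolding colorable_def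
  proof (intro exI[of _ "h \<circ> g"] conjI ballI impI)
    fix a assume "a \<in> V"
    thus "(h \<circ> g) a < card W" using h assms(2) bij_betwE by fastforce
  next
    fix a b assume "a \<in> V" "b \<in> V" "E a b"
    thus "(h \<circ> g) a \<noteq> (h \<circ> g) b" using h assms(2,3) bij_betw_imp_inj_on
      by (metis comp_apply inj_on_def)
  qed
  hence "chromatic_number V E \<le> card W" unfolding chromatic_number_def by (rule Least_le)
  thus ?thesis using assms(4) by simp
qed

theorem claim4:
  fixes GV :: "nat \<Rightarrow> nat \<Rightarrow> nat set"
    and GE :: "nat \<Rightarrow> nat \<Rightarrow> nat \<Rightarrow> nat \<Rightarrow> bool"
    and \<eta> :: "tvert \<Rightarrow> nat \<times> nat"
  assumes fin: "\<And>j i. finite (GV j i)"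
    and nonempty: "\<And>j i. GV j i \<noteq> {}"
    and simple: "\<And>j i. simple_graph (GV j i) (GE j i)"
    and chi: "\<And>j i. chromatic_number (GV j i) (GE j i) \<ge> i"
    and no_odd: "\<And>j i n. odd n \<Longrightarrow> n \<le> j \<Longrightarrow> \<not> has_cycle_of_length (GV j i) (GE j i) n"
    and unb1: "\<forall>N. \<exists>i. snd (\<eta> (L1 i)) > N"
    and unb2: "\<forall>i N. \<exists>j. snd (\<eta> (L2 i j)) > N"
  shows "\<not> (\<exists>f. graph_hom (Geta_verts GV \<eta>) (Geta_adj GV GE \<eta>) G1_verts G1_adj f)"
proof
  assume "\<exists>f. graph_hom (Geta_verts GV \<eta>) (Geta_adj GV GE \<eta>) G1_verts G1_adj f"
  then obtain f where hom: "graph_hom (Geta_verts GV \<eta>) (Geta_adj GV GE \<eta>) G1_verts G1_adj f"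
    by blast
  define GVx where "GVx x = GV (fst (\<eta> x)) (snd (\<eta> x))" for x
  have mem: "(x, a) \<in> Geta_verts GV \<eta> \<longleftrightarrow> a \<in> GVx x" for x a
    by (simp add: Geta_verts_def GVx_def)
  have adjT: "G1_adj (f (x,a)) (f (y,b))"
    if "tree_adj x y" "a \<in> GVx x" "b \<in> GVx y" for x y a b
  proof -
    have "Geta_adj GV GE \<eta> (x,a) (y,b)" using that mem by (simp add: Geta_adj_def)
    thus ?thesis using hom by (simp add: graph_hom_def)
  qed
  have bound: "snd (\<eta> y) \<le> card W"
    if "finite W" "\<forall>b\<in>GVx y. f (y,b) \<in> W" for y W
  proof (rule hom_bound[OF that(1), where g = "\<lambda>b. f (y,b)" and V = "GVx y"
        and E = "GE (fst (\<eta> y)) (snd (\<eta> y))"])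
    show "\<forall>a\<in>GVx y. f (y, a) \<in> W" using that(2) .
    show "\<forall>a\<in>GVx y. \<forall>b\<in>GVx y. GE (fst (\<eta> y)) (snd (\<eta> y)) a b \<longrightarrow> f (y, a) \<noteq> f (y, b)"
    proof (intro ballI impI)
      fix a b assume ab: "a \<in> GVx y" "b \<in> GVx y" "GE (fst (\<eta> y)) (snd (\<eta> y)) a b"
      hence "Geta_adj GV GE \<eta> (y,a) (y,b)" using mem by (simp add: Geta_adj_def)
      hence "G1_adj (f (y,a)) (f (y,b))" using hom by (simp add: graph_hom_def)
      thus "f (y, a) \<noteq> f (y, b)" by (rule G1_adj_neq)
    qed
    show "snd (\<eta> y) \<le> chromatic_number (GVx y) (GE (fst (\<eta> y)) (snd (\<eta> y)))"
      unfolding GVx_def by (rule chi)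
  qed
  define W1 where "W1 n = ({..<n} \<times> {0}) \<union> (Blk n \<times> {1::nat})" for n
  have W1fin: "finite (W1 n)" for n unfolding W1_def using Blk_finite by auto
  have L: "snd (\<eta> y) \<le> card (W1 n)"
    if "a \<in> GVx x" "f (x,a) = (n,1)" "tree_adj x y" for x a n y
  proof (rule bound[OF W1fin], intro ballI)
    fix b assume "b \<in> GVx y"
    hence "G1_adj (n,1) (f (y,b))" using adjT[OF that(3) that(1)] that(2) by metis
    thus "f (y,b) \<in> W1 n" unfolding W1_def by (rule nb1)
  qed
  have snd01: "snd (f (x,a)) = 0 \<or> snd (f (x,a)) = 1" if "a \<in> GVx x" for x a
  proof -
    have "f (x,a) \<in> G1_verts" using hom that mem by (auto simp: graph_hom_def)
    thus ?thesis by (auto simp: G1_verts_def)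
  qed
  have lev1: "snd (f (L1 i, a)) = 0" if "a \<in> GVx (L1 i)" for i a
  proof (rule ccontr)
    assume "snd (f (L1 i, a)) \<noteq> 0"
    hence "f (L1 i, a) = (fst (f (L1 i, a)), 1)" using snd01[OF that] by (metis prod.collapse)
    then have "snd (\<eta> (L2 i j)) \<le> card (W1 (fst (f (L1 i, a))))" for j
      using L[OF that] by simp
    moreover obtain j where "snd (\<eta> (L2 i j)) > card (W1 (fst (f (L1 i, a))))"
      using unb2 by blast
    ultimately show False using not_le by blast
  qed
  have lev0: "snd (f (Root, a)) = 0" if "a \<in> GVx Root" for a
  proof (rule ccontr)
    assume "snd (f (Root, a)) \<noteq> 0"
    hence "f (Root, a) = (fst (f (Root, a)), 1)" using snd01[OF that] by (metis prod.collapse)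
    then have "snd (\<eta> (L1 i)) \<le> card (W1 (fst (f (Root, a))))" for i
      using L[OF that] by simp
    moreover obtain i where "snd (\<eta> (L1 i)) > card (W1 (fst (f (Root, a))))"
      using unb1 by blast
    ultimately show False using not_le by blast
  qed
  obtain a0 where a0: "a0 \<in> GVx Root" using nonempty unfolding GVx_def by blast
  define n where "n = fst (f (Root, a0))"
  have fa0: "f (Root, a0) = (n, 0)" using lev0[OF a0] n_def by (metis prod.collapse)
  have "snd (\<eta> (L1 i)) \<le> card (Blk n \<times> {0::nat})" for i
  proof (rule bound)
    show "finite (Blk n \<times> {0::nat})" using Blk_finite by auto
    show "\<forall>b\<in>GVx (L1 i). f (L1 i, b) \<in> Blk n \<times> {0}"
    proof
      fix b assume b: "b \<in> GVx (L1 i)"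
      have e: "f (L1 i, b) = (fst (f (L1 i, b)), 0)" using lev1[OF b] by (metis prod.collapse)
      have "G1_adj (n,0) (f (L1 i, b))" using adjT[of Root "L1 i" a0 b] a0 b fa0 by simp
      hence "fst (f (L1 i, b)) \<in> Blk n" using e nb0 by metis
      thus "f (L1 i, b) \<in> Blk n \<times> {0}" using e by (metis SigmaI singletonI)
    qed
  qed
  moreover obtain i where "snd (\<eta> (L1 i)) > card (Blk n \<times> {0::nat})" using unb1 by blast
  ultimately show False using not_le by blast
qed

end
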